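(* Let $n\geq3$ and let $V$ be a finite dimensional positively graded vector space such that $V^k=0$ for $k<\frac13 n$ or $k>\frac23 n-1$. Then every graph $\Gamma\in\mathbf{HGC}_{V,n}$ with at least one vertex has cohomological degree $|\Gamma|\leq0$.
   Context: Put $V_1=\mathbb{Q}1\oplus V$ with $|1|=0$. The graphs spanning $\mathbf{HGC}_{V,n}$ are connected graphs with internal vertices (here called vertices) and hairs (edges with one free end), in which each vertex carries a (possibly empty) monomial of decorations from $V^*$ (an element $\alpha\in(V^k)^*$ having degree $-k$), each hair carries one decoration from $V_1$, and each vertex is at least trivalent where every $V^*$-decoration at it counts $+1$ to its valence (i.e. if $v$ is the number of vertices, $e$ the number of edges including hairs, $h$ the number of hairs and $u$ the number of $V^*$-decorations, then $3v+h\le 2e+u$). The cohomological degree of such a graph is $|\Gamma|=nv-(n-1)e+d+D$, where $d$ is the total degree of the $V^*$-decorations and $D$ the total degree of the hair decorations in $V_1$. (The edgeless elements and the single edge with two hair ends have no vertex.) *)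

theory Defs
  imports Main
begin

text \<open>A finite dimensional positively graded vector space V is recorded (up to isomorphism)
by its dimension function: dimV k = dim V^k. Only this data enters the degree.\<close>

definition pos_graded_fin_dim :: "(nat \<Rightarrow> nat) \<Rightarrow> bool" where
  "pos_graded_fin_dim dimV \<longleftrightarrow> dimV 0 = 0 \<and> finite {k. dimV k \<noteq> 0}"

text \<open>A (homogeneously decorated) hairy graph with vertices 0..<nverts.
 iedges: edges between two vertices; hairs: for each hair the vertex it is attached to;
 vdec i: the list of degrees k of the decorations alpha in (V^k)^* at vertex i (the monomial);
 hdec: for each hair the degree of its decoration in V_1 = Q1 + V (0 means the unit 1).\<close>

record hgraph =
  nverts :: nat
  iedges :: "(nat \<times> nat) list"
  hairs  :: "nat list"
  vdec   :: "nat \<Rightarrow> nat list"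
  hdec   :: "nat list"

definition adjacent :: "hgraph \<Rightarrow> nat \<Rightarrow> nat \<Rightarrow> bool" where
  "adjacent G i j \<longleftrightarrow> (i, j) \<in> set (iedges G) \<or> (j, i) \<in> set (iedges G)"

definition valence :: "hgraph \<Rightarrow> nat \<Rightarrow> nat" where
  "valence G i =
     length (filter (\<lambda>ed. fst ed = i) (iedges G))
   + length (filter (\<lambda>ed. snd ed = i) (iedges G))
   + length (filter (\<lambda>x. x = i) (hairs G))
   + length (vdec G i)"

definition is_HGC_graph :: "(nat \<Rightarrow> nat) \<Rightarrow> hgraph \<Rightarrow> bool" where
  "is_HGC_graph dimV G \<longleftrightarrow>
     (\<forall>ed \<in> set (iedges G). fst ed < nverts G \<and> snd ed < nverts G)
   \<and> (\<forall>x \<in> set (hairs G). x < nverts G)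
   \<and> length (hdec G) = length (hairs G)
   \<and> (\<forall>i < nverts G. \<forall>k \<in> set (vdec G i). dimV k \<noteq> 0)
   \<and> (\<forall>k \<in> set (hdec G). k = 0 \<or> dimV k \<noteq> 0)
   \<and> (\<forall>i < nverts G. \<forall>j < nverts G. (adjacent G)\<^sup>*\<^sup>* i j)
   \<and> (\<forall>i < nverts G. valence G i \<ge> 3)"

definition hgc_degree :: "nat \<Rightarrow> hgraph \<Rightarrow> int" where
  "hgc_degree n G =
     int n * int (nverts G)
   - (int n - 1) * int (length (iedges G) + length (hairs G))
   - int (\<Sum>i<nverts G. sum_list (vdec G i))
   + int (sum_list (hdec G))"

end

theory Submission
  imports Defs
begin

lemma sum_filter_count:
  assumes "\<forall>x\<in>set xs. f x < (v::nat)"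
  shows "(\<Sum>i<v. length (filter (\<lambda>x. f x = i) xs)) = length xs"
  using assms
proof (induction xs)
  case Nil then show ?case by simp
next
  case (Cons a xs)
  have "(\<Sum>i<v. length (filter (\<lambda>x. f x = i) (a#xs)))
      = (\<Sum>i<v. (if f a = i then 1 else 0) + length (filter (\<lambda>x. f x = i) xs))"
    by (rule sum.cong) auto
  also have "\<dots> = (\<Sum>i<v. (if f a = i then 1 else 0)) + length xs"
    using Cons by (simp add: sum.distrib)
  also have "(\<Sum>i<v. (if f a = i then 1 else 0::nat)) = 1"
    proof -
    have "f a < v" using Cons.prems by simp
    then show ?thesis by (simp add: sum.delta')
  qed
  finally show ?case by simp
qed

lemma sum_list_lower:
  assumes "\<forall>k\<in>set ks. n \<le> 3 * k"
  shows "n * length ks \<le> 3 * sum_list ks"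
  using assms by (induction ks) auto

lemma sum_list_upper:
  assumes "\<forall>k\<in>set ks. 3 * int k \<le> m"
  shows "3 * int (sum_list ks) \<le> m * int (length ks)"
  using assms by (induction ks) (auto simp: algebra_simps)

theorem lemma13p2:
  fixes n :: nat and dimV :: "nat \<Rightarrow> nat" and G :: hgraph
  assumes "n \<ge> 3"
    and "pos_graded_fin_dim dimV"
    and "\<forall>k. (3 * int k < int n \<or> 3 * int k > 2 * int n - 3) \<longrightarrow> dimV k = 0"
    and "is_HGC_graph dimV G"
    and "nverts G \<ge> 1"
  shows "hgc_degree n G \<le> 0"
proof -
  define v where "v = nverts G"
  define e where "e = length (iedges G)"
  define h where "h = length (hairs G)"
  define u where "u = (\<Sum>i<v. length (vdec G i))"
  define d where "d = (\<Sum>i<v. sum_list (vdec G i))"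
  define D where "D = sum_list (hdec G)"
  note H = assms(4)[unfolded is_HGC_graph_def]
  have val: "3 * v \<le> 2 * e + h + u"
  proof -
    have "3 * v = (\<Sum>i<v. 3::nat)" by simp
    also have "\<dots> \<le> (\<Sum>i<v. valence G i)"
      by (rule sum_mono) (use H in \<open>auto simp: v_def\<close>)
    also have "\<dots> = (\<Sum>i<v. length (filter (\<lambda>ed. fst ed = i) (iedges G)))
       + (\<Sum>i<v. length (filter (\<lambda>ed. snd ed = i) (iedges G)))
       + (\<Sum>i<v. length (filter (\<lambda>x. x = i) (hairs G))) + u"
      by (simp add: valence_def sum.distrib u_def)
    also have "\<dots> = 2 * e + h + u"
      using sum_filter_count[of "iedges G" fst v] sum_filter_count[of "iedges G" snd v]
        sum_filter_count[of "hairs G" "\<lambda>x. x" v] H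
      by (simp add: v_def e_def h_def)
    finally show ?thesis .
  qed
  have dl: "n * u \<le> 3 * d"
  proof -
    have "n * u = (\<Sum>i<v. n * length (vdec G i))" by (simp add: u_def sum_distrib_left)
    also have "\<dots> \<le> (\<Sum>i<v. 3 * sum_list (vdec G i))"
    proof (rule sum_mono)
      fix i assume "i \<in> {..<v}"
      have "\<forall>k\<in>set (vdec G i). n \<le> 3 * k"
      proof
        fix k assume k: "k \<in> set (vdec G i)"
        have "dimV k \<noteq> 0" using H k \<open>i \<in> {..<v}\<close> by (auto simp: v_def)
        then have "\<not> 3 * int k < int n" using assms(3) by auto
        then show "n \<le> 3 * k" by linarith
      qed
      then show "n * length (vdec G i) \<le> 3 * sum_list (vdec G i)" by (rule sum_list_lower)
    qed
    also have "\<dots> = 3 * d" by (simp add: d_def sum_distrib_left)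
    finally show ?thesis .
  qed
  have Du: "3 * int D \<le> (2 * int n - 3) * int h"
  proof -
    have "\<forall>k\<in>set (hdec G). 3 * int k \<le> 2 * int n - 3"
    proof
      fix k assume k: "k \<in> set (hdec G)"
      have "k = 0 \<or> dimV k \<noteq> 0" using H k by auto
      then show "3 * int k \<le> 2 * int n - 3"
      proof
        assume "dimV k \<noteq> 0"
        then have "\<not> 2 * int n - 3 < 3 * int k" using assms(3) by auto
        then show ?thesis by linarith
      qed (use assms(1) in simp)
    qed
    then have "3 * int D \<le> (2 * int n - 3) * int (length (hdec G))"
      unfolding D_def by (rule sum_list_upper)
    then show ?thesis using H by (simp add: h_def)
  qed
  have Du': "3 * int D \<le> 2 * (int n * int h) - 3 * int h" using Du by (simp add: algebra_simps)
  have deg: "hgc_degree n G = int n * int v - int n * int e - int n * int h + int e + int h - int d + int D"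
    by (simp add: hgc_degree_def v_def e_def h_def d_def D_def algebra_simps)
  have nn: "int n \<ge> 3" using assms(1) by simp
  have dl': "int n * int u \<le> 3 * int d" using dl by (metis of_nat_le_iff of_nat_mult of_nat_numeral)
  have val': "3 * int v \<le> 2 * int e + int h + int u" using val by linarith
  show ?thesis
  proof (cases "3 * v \<le> 2 * e")
    case True
    then have a: "3 * int n * int v \<le> 2 * int n * int e"
    proof -
      have "int n * (3 * int v) \<le> int n * (2 * int e)"
        using True by (intro mult_left_mono) auto
      then show ?thesis by (simp add: algebra_simps)
    qed
    have a': "3 * (int n * int v) \<le> 2 * (int n * int e)" using a by (simp add: algebra_simps)
    have b: "3 * int e \<le> int n * int e" using mult_right_mono[OF nn, of "int e"] by simp
    have c: "0 \<le> int n * int h" "0 \<le> int n * int u" by auto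
    show ?thesis unfolding deg using a' b c dl' Du' nn by linarith
  next
    case False
    have a: "int n * (3 * int v) \<le> int n * (2 * int e + int h + int u)"
      using mult_left_mono[OF val', of "int n"] by simp
    have b: "3 * int e \<le> int n * int e" using mult_right_mono[OF nn, of "int e"] by simp
    show ?thesis proof -
      have a': "3 * (int n * int v) \<le> 2 * (int n * int e) + int n * int h + int n * int u"
        using a by (simp add: algebra_simps)
      show ?thesis unfolding deg using a' b dl' Du' nn by linarith
    qed
  qed
qed

end
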